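(* Let $X$ be a compact Hausdorff space and let $M$ be a self-conjugate function space on $X$. Then for any three pairwise distinct points $x,x',z\in Ch(M)$ there exists $h\in M$ such that $|h(x)|\neq|h(x')|$ and $h(z)=0$.
   Context: $C(X)$ denotes the space of continuous scalar-valued (real or complex) functions on $X$ with the supremum norm. A function space on $X$ is a linear subspace of $C(X)$ containing the constant function $1$ and separating the points of $X$; it is self-conjugate if $\bar f\in M$ whenever $f\in M$. For a linear subspace $A\subseteq C(X)$, its Choquet boundary $Ch(A)$ is the set of points $x\in X$ such that the evaluation functional $\delta_x:A\to$ scalars, $g\mapsto g(x)$, is an extreme point of the closed unit ball of the dual space of $(A,\|\cdot\|)$. *)

theory Defs
  imports "HOL-Analysis.Analysis"
begin

text \<open>Scalar field 'k is real or complex (both instances of real_normed_field).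
  C(X) = continuous 'k-valued functions on the topological space X.\<close>

definition Cfun :: "'a topology \<Rightarrow> ('a \<Rightarrow> 'k::real_normed_field) set" where
  "Cfun X = {f. continuous_map X euclidean f}"

definition supnorm :: "'a topology \<Rightarrow> ('a \<Rightarrow> 'k::real_normed_field) \<Rightarrow> real" where
  "supnorm X f = (SUP x\<in>topspace X. norm (f x))"

definition linear_subspace_fun :: "'a topology \<Rightarrow> ('a \<Rightarrow> 'k::real_normed_field) set \<Rightarrow> bool" where
  "linear_subspace_fun X A \<longleftrightarrow> A \<subseteq> Cfun X \<and> (\<lambda>x. 0) \<in> A \<and>
     (\<forall>f\<in>A. \<forall>g\<in>A. (\<lambda>x. f x + g x) \<in> A) \<and>
     (\<forall>c. \<forall>f\<in>A. (\<lambda>x. c * f x) \<in> A)"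

definition function_space :: "'a topology \<Rightarrow> ('a \<Rightarrow> 'k::real_normed_field) set \<Rightarrow> bool" where
  "function_space X M \<longleftrightarrow> linear_subspace_fun X M \<and> (\<lambda>x. 1) \<in> M \<and>
     (\<forall>x\<in>topspace X. \<forall>y\<in>topspace X. x \<noteq> y \<longrightarrow> (\<exists>f\<in>M. f x \<noteq> f y))"

definition self_conjugate :: "('a \<Rightarrow> complex) set \<Rightarrow> bool" where
  "self_conjugate M \<longleftrightarrow> (\<forall>f\<in>M. (\<lambda>x. cnj (f x)) \<in> M)"

text \<open>Closed unit ball of the dual of (A, sup norm): 'k-linear functionals on A
  of norm at most 1.  Functionals are identified by their values on A.\<close>

definition dual_ball :: "'a topology \<Rightarrow> ('a \<Rightarrow> 'k::real_normed_field) set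
     \<Rightarrow> (('a \<Rightarrow> 'k) \<Rightarrow> 'k) set" where
  "dual_ball X A = {\<phi>.
     (\<forall>f\<in>A. \<forall>g\<in>A. \<phi> (\<lambda>x. f x + g x) = \<phi> f + \<phi> g) \<and>
     (\<forall>c. \<forall>f\<in>A. \<phi> (\<lambda>x. c * f x) = c * \<phi> f) \<and>
     (\<forall>f\<in>A. norm (\<phi> f) \<le> supnorm X f)}"

definition dual_ball_extreme :: "'a topology \<Rightarrow> ('a \<Rightarrow> 'k::real_normed_field) set
     \<Rightarrow> (('a \<Rightarrow> 'k) \<Rightarrow> 'k) \<Rightarrow> bool" where
  "dual_ball_extreme X A \<phi> \<longleftrightarrow> \<phi> \<in> dual_ball X A \<and>
     (\<forall>\<psi>1\<in>dual_ball X A. \<forall>\<psi>2\<in>dual_ball X A. \<forall>t::real. 0 < t \<and> t < 1 \<and>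
        (\<forall>f\<in>A. \<phi> f = of_real t * \<psi>1 f + of_real (1 - t) * \<psi>2 f)
        \<longrightarrow> (\<forall>f\<in>A. \<psi>1 f = \<psi>2 f))"

definition choquet_boundary :: "'a topology \<Rightarrow> ('a \<Rightarrow> 'k::real_normed_field) set \<Rightarrow> 'a set" where
  "choquet_boundary X A = {x\<in>topspace X. dual_ball_extreme X A (\<lambda>g. g x)}"

end

theory Submission
  imports Defs
begin

lemma cx: fixes p q r s :: complex
  assumes "cmod p = cmod r" "cmod q = cmod s" "cmod (p+q) = cmod (r+s)" "cmod (p + \<i> * q) = cmod (r + \<i> * s)"
  shows "p * cnj q = r * cnj s"
proof -
  have e: "\<And>u v::complex. cmod u = cmod v \<Longrightarrow> Re u ^2 + Im u ^2 = Re v ^2 + Im v^2"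
    by (metis cmod_power2)
  from e[OF assms(1)] e[OF assms(2)] e[OF assms(3)] e[OF assms(4)] show ?thesis
    by (simp add: complex_eq_iff power2_eq_square algebra_simps)
qed

lemma rx: fixes p q r s :: real
  assumes "\<bar>p\<bar> = \<bar>r\<bar>" "\<bar>q\<bar> = \<bar>s\<bar>" "\<bar>p+q\<bar> = \<bar>r+s\<bar>"
  shows "p * q = r * s"
proof -
  have e: "\<And>u v::real. \<bar>u\<bar> = \<bar>v\<bar> \<Longrightarrow> u^2 = v^2" by (metis power2_abs)
  from e[OF assms(1)] e[OF assms(2)] e[OF assms(3)] show ?thesis
    by (simp add: power2_eq_square algebra_simps)
qed

lemma eval_dual_ball:
  fixes A :: "('a \<Rightarrow> 'k::real_normed_field) set"
  assumes "compact_space X" "A \<subseteq> Cfun X" "y \<in> topspace X"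
  shows "(\<lambda>g. g y) \<in> dual_ball X A"
proof -
  have "norm (f y) \<le> supnorm X f" if "f \<in> A" for f
  proof -
    have c: "continuous_map X euclidean f" using assms(2) that by (auto simp: Cfun_def)
    have "continuous_map X euclidean (\<lambda>x. norm (f x))"
      using continuous_map_norm[OF c] .
    then have "compactin euclidean ((\<lambda>x. norm (f x)) ` topspace X)"
      using assms(1) image_compactin compact_space_def by blast
    then have "bounded ((\<lambda>x. norm (f x)) ` topspace X)"
      by (simp add: compact_imp_bounded)
    then have "bdd_above ((\<lambda>x. norm (f x)) ` topspace X)"
      by (rule bounded_imp_bdd_above)
    then show ?thesis unfolding supnorm_def using assms(3) by (rule cSUP_upper2) simp
  qed
  then show ?thesis by (simp add: dual_ball_def)
qed

lemma key_contra:
  fixes M :: "('a \<Rightarrow> 'k::real_normed_field) set"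
  assumes "compact_space X" "function_space X M" "x \<in> topspace X" "x' \<in> topspace X" "x \<noteq> x'"
    "z \<in> choquet_boundary X M" "\<forall>f\<in>M. f x + f x' = 2 * f z"
  shows False
proof -
  have sub: "M \<subseteq> Cfun X" using assms(2) by (simp add: function_space_def linear_subspace_fun_def)
  have ext: "dual_ball_extreme X M (\<lambda>g. g z)" using assms(6) by (simp add: choquet_boundary_def)
  have d1: "(\<lambda>g. g x) \<in> dual_ball X M" by (rule eval_dual_ball[OF assms(1) sub assms(3)])
  have d2: "(\<lambda>g. g x') \<in> dual_ball X M" by (rule eval_dual_ball[OF assms(1) sub assms(4)])
  have h: "\<forall>f\<in>M. f z = of_real (1/2) * f x + of_real (1 - 1/2) * f x'"
  proof
    fix f assume "f \<in> M"
    then have "f x + f x' = 2 * f z" using assms(7) by blast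
    then have "f z = (f x + f x') / 2" by simp
    also have "\<dots> = of_real (1/2) * f x + of_real (1 - 1/2) * f x'"
      by (simp add: field_simps)
    finally show "f z = of_real (1/2) * f x + of_real (1 - 1/2) * f x'" .
  qed
  have t: "0 < (1/2::real) \<and> (1/2::real) < 1" by simp
  have E: "\<forall>\<psi>1\<in>dual_ball X M. \<forall>\<psi>2\<in>dual_ball X M. \<forall>t::real. 0 < t \<and> t < 1 \<and>
        (\<forall>f\<in>M. (\<lambda>g. g z) f = of_real t * \<psi>1 f + of_real (1 - t) * \<psi>2 f)
        \<longrightarrow> (\<forall>f\<in>M. \<psi>1 f = \<psi>2 f)"
    using ext unfolding dual_ball_extreme_def by (rule conjunct2)
  have "\<forall>f\<in>M. (\<lambda>g. g x) f = (\<lambda>g. g x') f"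
    by (rule E[THEN bspec, OF d1, THEN bspec, OF d2, THEN spec, of "1/2", THEN mp]) (use h t in simp)
  moreover obtain f where "f \<in> M" "f x \<noteq> f x'"
    using assms(2-5) unfolding function_space_def by blast
  ultimately show False by blast
qed

lemma closure_facts:
  fixes M :: "('a \<Rightarrow> 'k::real_normed_field) set"
  assumes "function_space X M"
  shows "\<And>f g. f \<in> M \<Longrightarrow> g \<in> M \<Longrightarrow> (\<lambda>w. f w + g w) \<in> M"
    and "\<And>f c. f \<in> M \<Longrightarrow> (\<lambda>w. c * f w) \<in> M"
    and "\<And>f c. f \<in> M \<Longrightarrow> (\<lambda>w. f w - c) \<in> M"
proof -
  show A: "\<And>f g. f \<in> M \<Longrightarrow> g \<in> M \<Longrightarrow> (\<lambda>w. f w + g w) \<in> M"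
    using assms by (simp add: function_space_def linear_subspace_fun_def)
  show B: "\<And>f c. f \<in> M \<Longrightarrow> (\<lambda>w. c * f w) \<in> M"
    using assms by (simp add: function_space_def linear_subspace_fun_def)
  fix f c assume f: "f \<in> M"
  have "(\<lambda>w. (-c) * 1) \<in> M" using B[of "\<lambda>_. 1" "-c"] assms by (simp add: function_space_def)
  from A[OF f this] show "(\<lambda>w. f w - c) \<in> M" by simp
qed

theorem mainTheorem3:
  shows "(\<forall>(X::'a topology) (M::('a \<Rightarrow> real) set) x x' z.
            compact_space X \<and> Hausdorff_space X \<and> function_space X M \<and>
            x \<in> choquet_boundary X M \<and> x' \<in> choquet_boundary X M \<and> z \<in> choquet_boundary X M \<and>
            x \<noteq> x' \<and> x \<noteq> z \<and> x' \<noteq> z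
            \<longrightarrow> (\<exists>h\<in>M. \<bar>h x\<bar> \<noteq> \<bar>h x'\<bar> \<and> h z = 0))
       \<and> (\<forall>(X::'a topology) (M::('a \<Rightarrow> complex) set) x x' z.
            compact_space X \<and> Hausdorff_space X \<and> function_space X M \<and> self_conjugate M \<and>
            x \<in> choquet_boundary X M \<and> x' \<in> choquet_boundary X M \<and> z \<in> choquet_boundary X M \<and>
            x \<noteq> x' \<and> x \<noteq> z \<and> x' \<noteq> z
            \<longrightarrow> (\<exists>h\<in>M. cmod (h x) \<noteq> cmod (h x') \<and> h z = 0))"
proof (intro conjI allI impI)
  fix X :: "'a topology" and M :: "('a \<Rightarrow> real) set" and x x' z
  assume H: "compact_space X \<and> Hausdorff_space X \<and> function_space X M \<and>
            x \<in> choquet_boundary X M \<and> x' \<in> choquet_boundary X M \<and> z \<in> choquet_boundary X M \<and>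
            x \<noteq> x' \<and> x \<noteq> z \<and> x' \<noteq> z"
  then have fs: "function_space X M" and tx: "x \<in> topspace X" and tx': "x' \<in> topspace X"
    by (auto simp: choquet_boundary_def)
  show "\<exists>h\<in>M. \<bar>h x\<bar> \<noteq> \<bar>h x'\<bar> \<and> h z = 0"
  proof (rule ccontr)
    assume N: "\<not> ?thesis"
    have P: "\<bar>h x - h z\<bar> = \<bar>h x' - h z\<bar>" if "h \<in> M" for h
      using N closure_facts(3)[OF fs that, of "h z"] by auto
    have Q: "(h x - h z) * (k x - k z) = (h x' - h z) * (k x' - k z)" if "h \<in> M" "k \<in> M" for h k
      using rx[OF P[OF that(1)] P[OF that(2)]] P[OF closure_facts(1)[OF fs that]]
      by (simp add: algebra_simps)
    obtain k where k: "k \<in> M" "k x \<noteq> k x'"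
      using fs tx tx' H unfolding function_space_def by blast
    have kk: "k x' - k z = - (k x - k z)" "k x - k z \<noteq> 0"
      using P[OF k(1)] k(2) by (auto simp: abs_if split: if_splits)
    have "\<forall>f\<in>M. f x + f x' = 2 * f z"
    proof
      fix f assume f: "f \<in> M"
      have "(f x - f z) * (k x - k z) = (f x' - f z) * (k x' - k z)"
        using Q[OF f k(1)] .
      also have "\<dots> = - ((f x' - f z) * (k x - k z))" by (simp add: kk(1) algebra_simps)
      finally have "(f x - f z + (f x' - f z)) * (k x - k z) = 0" by (simp add: algebra_simps)
      then have "f x - f z + (f x' - f z) = 0" using kk(2) by simp
      then show "f x + f x' = 2 * f z" by simp
    qed
    then show False using key_contra[of X M x x' z] H tx tx' by blast
  qed
next
  fix X :: "'a topology" and M :: "('a \<Rightarrow> complex) set" and x x' z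
  assume H: "compact_space X \<and> Hausdorff_space X \<and> function_space X M \<and> self_conjugate M \<and>
            x \<in> choquet_boundary X M \<and> x' \<in> choquet_boundary X M \<and> z \<in> choquet_boundary X M \<and>
            x \<noteq> x' \<and> x \<noteq> z \<and> x' \<noteq> z"
  then have fs: "function_space X M" and tx: "x \<in> topspace X" and tx': "x' \<in> topspace X"
    and sc: "self_conjugate M"
    by (auto simp: choquet_boundary_def)
  show "\<exists>h\<in>M. cmod (h x) \<noteq> cmod (h x') \<and> h z = 0"
  proof (rule ccontr)
    assume N: "\<not> ?thesis"
    have P: "cmod (h x - h z) = cmod (h x' - h z)" if "h \<in> M" for h
      using N closure_facts(3)[OF fs that, of "h z"] by auto
    have Q: "(h x - h z) * cnj (k x - k z) = (h x' - h z) * cnj (k x' - k z)" if "h \<in> M" "k \<in> M" for h k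
    proof -
      have ik: "(\<lambda>w. \<i> * k w) \<in> M" using closure_facts(2)[OF fs that(2)] .
      have s1: "cmod ((h x - h z) + (k x - k z)) = cmod ((h x' - h z) + (k x' - k z))"
        using P[OF closure_facts(1)[OF fs that]] by (simp only: add_diff_add)
      have s2: "cmod ((h x - h z) + \<i> * (k x - k z)) = cmod ((h x' - h z) + \<i> * (k x' - k z))"
        using P[OF closure_facts(1)[OF fs that(1) ik]] by (simp only: add_diff_add right_diff_distrib[symmetric])
      show ?thesis
        by (rule cx[OF P[OF that(1)] P[OF that(2)] s1 s2])
    qed
    obtain k where k: "k \<in> M" "k x \<noteq> k x'"
      using fs tx tx' H unfolding function_space_def by blast
    define a where "a = k x - k z"
    define b where "b = k x' - k z"
    have ab: "cmod a = cmod b" "a \<noteq> b" using P[OF k(1)] k(2) by (auto simp: a_def b_def)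
    then have a0: "a \<noteq> 0" by (metis norm_eq_zero)
    have b0: "b \<noteq> 0"
    proof
      assume "b = 0"
      with ab(1) have "cmod a = 0" by simp
      with a0 show False by simp
    qed
    define \<mu> where "\<mu> = cnj (b / a)"
    have mu1: "\<mu> \<noteq> 1"
    proof
      assume "\<mu> = 1"
      then have "b / a = 1" by (metis \<mu>_def complex_cnj_cnj complex_cnj_one)
      then show False using ab a0 by simp
    qed
    have mun: "cmod \<mu> = 1" using ab a0 b0 by (simp add: \<mu>_def norm_divide)
    have R: "f x - f z = \<mu> * (f x' - f z)" if f: "f \<in> M" for f
    proof -
      have "(f x - f z) * cnj a = (f x' - f z) * cnj b" using Q[OF f k(1)] by (simp add: a_def b_def)
      moreover have "cnj a \<noteq> 0" using a0 by simp
      ultimately have "f x - f z = (f x' - f z) * cnj b / cnj a" by (simp add: eq_divide_eq)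
      then show ?thesis by (simp add: \<mu>_def complex_cnj_divide)
    qed
    have "cnj (k x - k z) = \<mu> * cnj (k x' - k z)"
      using R[of "\<lambda>w. cnj (k w)"] sc k(1) by (simp add: self_conjugate_def)
    then have "cnj a = \<mu> * cnj b" by (simp add: a_def b_def)
    moreover have "a = \<mu> * b" using R[OF k(1)] by (simp add: a_def b_def)
    ultimately have "cnj \<mu> * cnj b = \<mu> * cnj b" by simp
    then have mr: "cnj \<mu> = \<mu>" using b0 by simp
    then have "Im \<mu> = 0" by (simp add: complex_eq_iff)
    then have "\<mu> = of_real (Re \<mu>)" by (simp add: complex_eq_iff)
    moreover have "\<bar>Re \<mu>\<bar> = 1" using mun \<open>Im \<mu> = 0\<close> by (simp add: cmod_def)
    ultimately have mm: "\<mu> = -1" using mu1 by (auto simp: abs_if split: if_splits)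
    have "\<forall>f\<in>M. f x + f x' = 2 * f z"
    proof
      fix f assume f: "f \<in> M"
      from R[OF f] mm show "f x + f x' = 2 * f z" by (simp add: algebra_simps)
    qed
    then show False using key_contra[of X M x x' z] H tx tx' by blast
  qed
qed

end
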